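(* Let $K$ be a field of characteristic $0$, $\theta=t\frac{d}{dt}$, $\mathcal{L}=\theta^n+\sum_{i=0}^{n-1}a_i\theta^i$ with $a_i\in K(t)$, and $\mathcal{M}_{\mathcal{L}}=K(t)[\theta]/K(t)[\theta]\mathcal{L}$ with generator $\eta$ and $\eta^{(i)}=\theta^i\eta$. Let $\langle\,,\rangle$ be a $K(t)$-bilinear horizontal pairing $\mathcal{M}_{\mathcal{L}}\times\mathcal{M}_{\mathcal{L}}\to K(t)$ such that $\langle\eta,\eta^{(i)}\rangle=0$ for $0\le i<n-1$, and put $\gamma=\langle\eta,\eta^{(n-1)}\rangle$. Then: (i) the pairing is uniquely determined by $\gamma$, and $\gamma=c\beta^{-1}$ for some $c\in K$, where $\beta$ is a $\beta$-factor of $\mathcal{L}$; (ii) the pairing is $(-1)^{n+1}$-symmetric; (iii) if $\gamma\neq0$ the pairing is a polarization.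
   Context: Horizontal means $\theta\langle x,y\rangle=\langle\theta x,y\rangle+\langle x,\theta y\rangle$. A $\beta$-factor of $\mathcal{L}$ is a non-zero solution (in some differential field extension of $K(t)$) of $n\,\theta\beta=2a_{n-1}\beta$. $\operatorname{Fil}^i$ is the $K(t)$-span of $\eta^{(j)}$, $0\le j\le n-1-i$; a polarization is a $K(t)$-bilinear, $(-1)^{n+1}$-symmetric, non-degenerate horizontal pairing with $\langle\operatorname{Fil}^i,\operatorname{Fil}^{n-i}\rangle=0$ for $0\le i\le n-1$. *)

theory Defs
  imports "HOL-Computational_Algebra.Computational_Algebra"
begin

type_synonym 'a rfun = "'a poly fract"

definition cst :: "'a::field_char_0 \<Rightarrow> 'a rfun" where
  "cst c = to_fract [:c:]"

text \<open>The derivation theta = t d/dt on K(t), computed on any representative p/q (the result is independent of it).\<close>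
definition theta :: "'a::field_char_0 rfun \<Rightarrow> 'a rfun" where
  "theta x = (SOME y. \<exists>p q. q \<noteq> 0 \<and> x = Fract p q \<and>
      y = Fract ([:0, 1:] * (pderiv p * q - p * pderiv q)) (q * q))"

text \<open>The module M_L = K(t)[theta]/K(t)[theta]L is the free K(t)-module with basis
  eta^(0), ..., eta^(n-1). Its elements are represented by coefficient functions
  v :: nat => K(t) with v k = 0 for k >= n, meaning sum_{k<n} v k * eta^(k).\<close>
definition Mod :: "nat \<Rightarrow> (nat \<Rightarrow> 'a::field_char_0 rfun) set" where
  "Mod n = {v. \<forall>k\<ge>n. v k = 0}"

definition eta :: "nat \<Rightarrow> nat \<Rightarrow> 'a::field_char_0 rfun" where
  "eta i = (\<lambda>k. if k = i then 1 else 0)"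

text \<open>Action of theta on M_L, using theta eta^(n-1) = eta^(n) = - sum_{k<n} a k eta^(k).\<close>
definition Theta :: "nat \<Rightarrow> (nat \<Rightarrow> 'a::field_char_0 rfun) \<Rightarrow> (nat \<Rightarrow> 'a rfun) \<Rightarrow> (nat \<Rightarrow> 'a rfun)" where
  "Theta n a v = (\<lambda>k. if k < n then
      theta (v k) + (if 1 \<le> k then v (k - 1) else 0) - v (n - 1) * a k
    else 0)"

definition bilinear_on :: "nat \<Rightarrow> ((nat \<Rightarrow> 'a::field_char_0 rfun) \<Rightarrow> (nat \<Rightarrow> 'a rfun) \<Rightarrow> 'a rfun) \<Rightarrow> bool" where
  "bilinear_on n P \<longleftrightarrow>
     (\<forall>u\<in>Mod n. \<forall>v\<in>Mod n. \<forall>w\<in>Mod n. \<forall>c.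
        P (\<lambda>k. u k + v k) w = P u w + P v w \<and>
        P w (\<lambda>k. u k + v k) = P w u + P w v \<and>
        P (\<lambda>k. c * u k) w = c * P u w \<and>
        P w (\<lambda>k. c * u k) = c * P w u)"

definition horizontal :: "nat \<Rightarrow> (nat \<Rightarrow> 'a::field_char_0 rfun) \<Rightarrow> ((nat \<Rightarrow> 'a rfun) \<Rightarrow> (nat \<Rightarrow> 'a rfun) \<Rightarrow> 'a rfun) \<Rightarrow> bool" where
  "horizontal n a P \<longleftrightarrow>
     (\<forall>x\<in>Mod n. \<forall>y\<in>Mod n. theta (P x y) = P (Theta n a x) y + P x (Theta n a y))"

definition admissible_pairing where
  "admissible_pairing n a P \<longleftrightarrow> bilinear_on n P \<and> horizontal n a P \<and>
     (\<forall>i. i + 1 < n \<longrightarrow> P (eta 0) (eta i) = 0)"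

text \<open>Fil^i = span of eta^(j), 0 <= j <= n-1-i (i.e. coefficients vanish for j >= n - i; Fil^n = 0).\<close>
definition Fil :: "nat \<Rightarrow> nat \<Rightarrow> (nat \<Rightarrow> 'a::field_char_0 rfun) set" where
  "Fil n i = {v \<in> Mod n. \<forall>j. n \<le> j + i \<longrightarrow> v j = 0}"

definition polarization where
  "polarization n a P \<longleftrightarrow> bilinear_on n P \<and> horizontal n a P \<and>
     (\<forall>x\<in>Mod n. \<forall>y\<in>Mod n. P y x = (-1) ^ (n + 1) * P x y) \<and>
     (\<forall>x\<in>Mod n. (\<forall>y\<in>Mod n. P x y = 0) \<longrightarrow> x = (\<lambda>_. 0)) \<and>
     (\<forall>i<n. \<forall>x\<in>Fil n i. \<forall>y\<in>Fil n (n - i). P x y = 0)"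

definition diff_ext :: "('a::field_char_0 rfun \<Rightarrow> 'b::field) \<Rightarrow> ('b \<Rightarrow> 'b) \<Rightarrow> bool" where
  "diff_ext phi D \<longleftrightarrow> inj phi \<and> phi 1 = 1 \<and>
     (\<forall>x y. phi (x + y) = phi x + phi y \<and> phi (x * y) = phi x * phi y) \<and>
     (\<forall>x y. D (x + y) = D x + D y \<and> D (x * y) = D x * y + x * D y) \<and>
     (\<forall>x. D (phi x) = phi (theta x))"

definition beta_factor :: "nat \<Rightarrow> (nat \<Rightarrow> 'a::field_char_0 rfun) \<Rightarrow> ('a rfun \<Rightarrow> 'b::field) \<Rightarrow> ('b \<Rightarrow> 'b) \<Rightarrow> 'b \<Rightarrow> bool" where
  "beta_factor n a phi D b \<longleftrightarrow> b \<noteq> 0 \<and> of_nat n * D b = 2 * phi (a (n - 1)) * b"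

end

theory Submission
  imports Defs
begin



lemma theta_Fract:
  fixes p q :: "'a::field_char_0 poly"
  assumes q: "q \<noteq> 0"
  shows "theta (Fract p q) = Fract ([:0, 1:] * (pderiv p * q - p * pderiv q)) (q * q)"
  unfolding theta_def
proof (rule someI2[where a="Fract ([:0, 1:] * (pderiv p * q - p * pderiv q)) (q * q)"])
  show "\<exists>pa qa. qa \<noteq> 0 \<and> Fract p q = Fract pa qa \<and>
     Fract ([:0, 1:] * (pderiv p * q - p * pderiv q)) (q * q) = Fract ([:0, 1:] * (pderiv pa * qa - pa * pderiv qa)) (qa * qa)"
    using q by blast
next
  fix y assume "\<exists>pa qa. qa \<noteq> 0 \<and> Fract p q = Fract pa qa \<and> y = Fract ([:0, 1:] * (pderiv pa * qa - pa * pderiv qa)) (qa * qa)"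
  then obtain p' q' where q': "q' \<noteq> 0" and e: "Fract p q = Fract p' q'"
    and y: "y = Fract ([:0, 1:] * (pderiv p' * q' - p' * pderiv q')) (q' * q')" by blast
  have h1: "p * q' = p' * q" using e q q' by (simp add: eq_fract)
  have h2: "pderiv p * q' + p * pderiv q' = pderiv p' * q + p' * pderiv q"
    using arg_cong[OF h1, of pderiv] by (simp add: pderiv_mult algebra_simps)
  have h3: "pderiv p * q' = pderiv p' * q + p' * pderiv q - p * pderiv q'"
    using h2 by (simp add: algebra_simps)
  have "(pderiv p' * q' - p' * pderiv q') * (q * q) = (pderiv p * q - p * pderiv q) * (q' * q')"
  proof -
    have "(pderiv p * q - p * pderiv q) * (q' * q') = q' * (q * (pderiv p * q') - (p * q') * pderiv q)"
      by (simp add: algebra_simps)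
    also have "\<dots> = q' * (q * (pderiv p' * q + p' * pderiv q - p * pderiv q') - (p' * q) * pderiv q)"
      using h1 h3 by simp
    also have "\<dots> = q' * q * q * pderiv p' - q * (p * q') * pderiv q'"
      by (simp add: algebra_simps)
    also have "\<dots> = q' * q * q * pderiv p' - q * (p' * q) * pderiv q'"
      using h1 by simp
    also have "\<dots> = (pderiv p' * q' - p' * pderiv q') * (q * q)"
      by (simp add: algebra_simps)
    finally show ?thesis by simp
  qed
  then show "y = Fract ([:0, 1:] * (pderiv p * q - p * pderiv q)) (q * q)"
    using q q' y by (simp add: eq_fract)
qed

lemma theta_0: "theta (0::'a::field_char_0 rfun) = 0"
  using theta_Fract[of "1::'a poly" 0] by (simp add: Zero_fract_def eq_fract)

lemma theta_1: "theta (1::'a::field_char_0 rfun) = 0"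
  using theta_Fract[of "1::'a poly" 1] by (simp add: One_fract_def Zero_fract_def eq_fract)

lemma theta_minus: "theta (- x :: 'a::field_char_0 rfun) = - theta x"
proof (cases x)
  case (Fract p q)
  then show ?thesis using theta_Fract[of q p] theta_Fract[of q "-p"] by (simp add: algebra_simps pderiv_minus)
qed

lemma theta_sign: "theta ((-1)^i * x :: 'a::field_char_0 rfun) = (-1)^i * theta x"
  by (cases "even i") (simp_all add: theta_minus)




lemma eta_Mod: "i < n \<Longrightarrow> (eta i :: nat \<Rightarrow> 'a::field_char_0 rfun) \<in> Mod n"
  by (simp add: eta_def Mod_def)

lemma Theta_Mod: "Theta n a v \<in> Mod n"
  by (simp add: Theta_def Mod_def)

lemma theta_eta_val: "theta ((eta i :: nat \<Rightarrow> 'a::field_char_0 rfun) k) = 0"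
  by (simp add: eta_def theta_0 theta_1)

lemma Theta_eta_lt:
  assumes "i + 1 < n"
  shows "Theta n a (eta i :: nat \<Rightarrow> 'a::field_char_0 rfun) = eta (i + 1)"
  using assms by (auto simp: Theta_def theta_0 theta_1 eta_def fun_eq_iff)

lemma Theta_eta_last:
  assumes "n \<ge> 1"
  shows "Theta n a (eta (n - 1) :: nat \<Rightarrow> 'a::field_char_0 rfun) = (\<lambda>k. if k < n then - a k else 0)"
  using assms by (auto simp: Theta_def theta_0 theta_1 eta_def fun_eq_iff)

lemma bil_add_left: "bilinear_on n P \<Longrightarrow> u \<in> Mod n \<Longrightarrow> v \<in> Mod n \<Longrightarrow> w \<in> Mod n \<Longrightarrow>
   P (\<lambda>k. u k + v k) w = P u w + P v w"
  unfolding bilinear_on_def by blast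
lemma bil_add_right: "bilinear_on n P \<Longrightarrow> u \<in> Mod n \<Longrightarrow> v \<in> Mod n \<Longrightarrow> w \<in> Mod n \<Longrightarrow>
   P w (\<lambda>k. u k + v k) = P w u + P w v"
  unfolding bilinear_on_def by blast
lemma bil_smul_left: "bilinear_on n P \<Longrightarrow> u \<in> Mod n \<Longrightarrow> w \<in> Mod n \<Longrightarrow>
   P (\<lambda>k. c * u k) w = c * P u w"
  unfolding bilinear_on_def by blast
lemma bil_smul_right: "bilinear_on n P \<Longrightarrow> u \<in> Mod n \<Longrightarrow> w \<in> Mod n \<Longrightarrow>
   P w (\<lambda>k. c * u k) = c * P w u"
  unfolding bilinear_on_def by blast

lemma P_zero_left:
  assumes "bilinear_on n P" "w \<in> Mod n"
  shows "P (\<lambda>_. 0) w = (0::'a::field_char_0 rfun)"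
proof -
  have z: "(\<lambda>_. 0::'a rfun) \<in> Mod n" by (simp add: Mod_def)
  have "P (\<lambda>k. 0 * (\<lambda>_. 0::'a rfun) k) w = 0 * P (\<lambda>_. 0) w"
    by (rule bil_smul_left[OF assms(1) z assms(2)])
  then show ?thesis by simp
qed

lemma P_zero_right:
  assumes "bilinear_on n P" "w \<in> Mod n"
  shows "P w (\<lambda>_. 0) = (0::'a::field_char_0 rfun)"
proof -
  have z: "(\<lambda>_. 0::'a rfun) \<in> Mod n" by (simp add: Mod_def)
  have "P w (\<lambda>k. 0 * (\<lambda>_. 0::'a rfun) k) = 0 * P w (\<lambda>_. 0)"
    by (rule bil_smul_right[OF assms(1) z assms(2)])
  then show ?thesis by simp
qed

lemma P_sum_left:
  fixes P :: "(nat \<Rightarrow> 'a::field_char_0 rfun) \<Rightarrow> (nat \<Rightarrow> 'a rfun) \<Rightarrow> 'a rfun"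
  assumes bil: "bilinear_on n P" and fin: "finite S" and f: "\<forall>k\<in>S. f k \<in> Mod n" and w: "w \<in> Mod n"
  shows "P (\<lambda>m. \<Sum>k\<in>S. f k m) w = (\<Sum>k\<in>S. P (f k) w)"
  using fin f
proof (induction S rule: finite_induct)
  case empty
  then show ?case using P_zero_left[OF bil w] by simp
next
  case (insert x F)
  have fx: "f x \<in> Mod n" using insert by simp
  have sF: "(\<lambda>m. \<Sum>k\<in>F. f k m) \<in> Mod n" using insert.prems by (simp add: Mod_def)
  have "P (\<lambda>m. \<Sum>k\<in>insert x F. f k m) w = P (\<lambda>m. f x m + (\<Sum>k\<in>F. f k m)) w"
    using insert by simp
  also have "\<dots> = P (f x) w + P (\<lambda>m. \<Sum>k\<in>F. f k m) w"
    by (rule bil_add_left[OF bil fx sF w])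
  also have "\<dots> = P (f x) w + (\<Sum>k\<in>F. P (f k) w)" using insert by simp
  finally show ?case using insert by simp
qed

lemma P_sum_right:
  fixes P :: "(nat \<Rightarrow> 'a::field_char_0 rfun) \<Rightarrow> (nat \<Rightarrow> 'a rfun) \<Rightarrow> 'a rfun"
  assumes bil: "bilinear_on n P" and fin: "finite S" and f: "\<forall>k\<in>S. f k \<in> Mod n" and w: "w \<in> Mod n"
  shows "P w (\<lambda>m. \<Sum>k\<in>S. f k m) = (\<Sum>k\<in>S. P w (f k))"
  using fin f
proof (induction S rule: finite_induct)
  case empty
  then show ?case using P_zero_right[OF bil w] by simp
next
  case (insert x F)
  have fx: "f x \<in> Mod n" using insert by simp
  have sF: "(\<lambda>m. \<Sum>k\<in>F. f k m) \<in> Mod n" using insert.prems by (simp add: Mod_def)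
  have "P w (\<lambda>m. \<Sum>k\<in>insert x F. f k m) = P w (\<lambda>m. f x m + (\<Sum>k\<in>F. f k m))"
    using insert by simp
  also have "\<dots> = P w (f x) + P w (\<lambda>m. \<Sum>k\<in>F. f k m)"
    by (rule bil_add_right[OF bil fx sF w])
  also have "\<dots> = P w (f x) + (\<Sum>k\<in>F. P w (f k))" using insert by simp
  finally show ?case using insert by simp
qed

lemma expand:
  assumes "x \<in> Mod n"
  shows "x = (\<lambda>m. \<Sum>k<n. x k * (eta k :: nat \<Rightarrow> 'a::field_char_0 rfun) m)"
proof
  fix m
  show "x m = (\<Sum>k<n. x k * eta k m)"
  proof (cases "m < n")
    case True
    have "(\<Sum>k<n. x k * eta k m) = (\<Sum>k<n. if k = m then x m else 0)"
      by (rule sum.cong) (auto simp: eta_def)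
    then show ?thesis using True by simp
  next
    case False
    then have "x m = 0" using assms by (simp add: Mod_def)
    moreover have "(\<Sum>k<n. x k * eta k m) = 0"
      using False by (intro sum.neutral) (auto simp: eta_def)
    ultimately show ?thesis by simp
  qed
qed

lemma P_left:
  fixes P :: "(nat \<Rightarrow> 'a::field_char_0 rfun) \<Rightarrow> (nat \<Rightarrow> 'a rfun) \<Rightarrow> 'a rfun"
  assumes bil: "bilinear_on n P" and x: "x \<in> Mod n" and w: "w \<in> Mod n"
  shows "P x w = (\<Sum>k<n. x k * P (eta k) w)"
proof -
  have fm: "\<forall>k\<in>{..<n}. (\<lambda>m. x k * eta k m) \<in> Mod n"
    by (auto simp: Mod_def eta_def)
  have "P x w = P (\<lambda>m. \<Sum>k<n. (\<lambda>m. x k * eta k m) m) w"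
    using expand[OF x] by simp
  also have "\<dots> = (\<Sum>k<n. P (\<lambda>m. x k * eta k m) w)"
    by (rule P_sum_left[OF bil _ fm w]) simp
  also have "\<dots> = (\<Sum>k<n. x k * P (eta k) w)"
  proof (rule sum.cong)
    fix k assume "k \<in> {..<n}"
    then have "eta k \<in> Mod n" by (simp add: eta_Mod)
    then show "P (\<lambda>m. x k * eta k m) w = x k * P (eta k) w"
      by (rule bil_smul_left[OF bil _ w])
  qed simp
  finally show ?thesis .
qed

lemma P_right:
  fixes P :: "(nat \<Rightarrow> 'a::field_char_0 rfun) \<Rightarrow> (nat \<Rightarrow> 'a rfun) \<Rightarrow> 'a rfun"
  assumes bil: "bilinear_on n P" and x: "x \<in> Mod n" and w: "w \<in> Mod n"
  shows "P w x = (\<Sum>k<n. x k * P w (eta k))"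
proof -
  have fm: "\<forall>k\<in>{..<n}. (\<lambda>m. x k * eta k m) \<in> Mod n"
    by (auto simp: Mod_def eta_def)
  have "P w x = P w (\<lambda>m. \<Sum>k<n. (\<lambda>m. x k * eta k m) m)"
    using expand[OF x] by simp
  also have "\<dots> = (\<Sum>k<n. P w (\<lambda>m. x k * eta k m))"
    by (rule P_sum_right[OF bil _ fm w]) simp
  also have "\<dots> = (\<Sum>k<n. x k * P w (eta k))"
  proof (rule sum.cong)
    fix k assume "k \<in> {..<n}"
    then have "eta k \<in> Mod n" by (simp add: eta_Mod)
    then show "P w (\<lambda>m. x k * eta k m) = x k * P w (eta k)"
      by (rule bil_smul_right[OF bil _ w])
  qed simp
  finally show ?thesis .
qed

lemma P_both:
  fixes P :: "(nat \<Rightarrow> 'a::field_char_0 rfun) \<Rightarrow> (nat \<Rightarrow> 'a rfun) \<Rightarrow> 'a rfun"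
  assumes bil: "bilinear_on n P" and x: "x \<in> Mod n" and y: "y \<in> Mod n"
  shows "P x y = (\<Sum>k<n. \<Sum>l<n. x k * y l * P (eta k) (eta l))"
proof -
  have "P x y = (\<Sum>k<n. x k * P (eta k) y)" by (rule P_left[OF bil x y])
  also have "\<dots> = (\<Sum>k<n. x k * (\<Sum>l<n. y l * P (eta k) (eta l)))"
    by (intro sum.cong refl arg_cong2[where f="(*)"] P_right[OF bil y] eta_Mod) simp
  also have "\<dots> = (\<Sum>k<n. \<Sum>l<n. x k * y l * P (eta k) (eta l))"
    by (simp add: sum_distrib_left mult.assoc)
  finally show ?thesis .
qed

lemma sum_single_at:
  assumes "m < (n::nat)" "\<forall>k<n. k \<noteq> m \<longrightarrow> f k = 0"
  shows "(\<Sum>k<n. f k) = (f m :: 'b::comm_monoid_add)"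
proof -
  have "(\<Sum>k<n. f k) = (\<Sum>k<n. if k = m then f m else 0)"
    using assms by (intro sum.cong) auto
  also have "\<dots> = f m" using assms(1) sum.delta[of "{..<n}" m "\<lambda>_. f m"] by simp
  finally show ?thesis .
qed

lemma horiz:
  "horizontal n a P \<Longrightarrow> x \<in> Mod n \<Longrightarrow> y \<in> Mod n \<Longrightarrow>
     theta (P x y) = P (Theta n a x) y + P x (Theta n a y)"
  unfolding horizontal_def by blast




lemma adm_parts:
  assumes "admissible_pairing n a P"
  shows "bilinear_on n P" "horizontal n a P" "\<And>i. i + 1 < n \<Longrightarrow> P (eta 0) (eta i) = 0"
  using assms unfolding admissible_pairing_def by auto

lemma vanish:
  fixes P :: "(nat \<Rightarrow> 'a::field_char_0 rfun) \<Rightarrow> (nat \<Rightarrow> 'a rfun) \<Rightarrow> 'a rfun"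
  assumes n1: "n \<ge> 1" and adm: "admissible_pairing n a P"
  shows "i < n \<Longrightarrow> (\<forall>j<n. i + j < n - 1 \<longrightarrow> P (eta i) (eta j) = 0) \<and>
            P (eta i) (eta (n - 1 - i)) = (-1)^i * P (eta 0) (eta (n - 1))"
proof (induction i)
  case 0
  then show ?case using adm_parts(3)[OF adm] by auto
next
  case (Suc i)
  have il: "i < n" using Suc by simp
  note IH = Suc.IH[OF il]
  have bil: "bilinear_on n P" and hor: "horizontal n a P" using adm_parts[OF adm] by auto
  have Ti: "Theta n a (eta i) = eta (Suc i)" using Theta_eta_lt[of i n a] Suc.prems by simp
  have A: "\<forall>j<n. Suc i + j < n - 1 \<longrightarrow> P (eta (Suc i)) (eta j) = 0"
  proof (intro allI impI)
    fix j assume j: "j < n" "Suc i + j < n - 1"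
    have Tj: "Theta n a (eta j) = eta (Suc j)" using Theta_eta_lt[of j n a] j by simp
    have "theta (P (eta i) (eta j)) = P (eta (Suc i)) (eta j) + P (eta i) (eta (Suc j))"
      using horiz[OF hor eta_Mod[OF il] eta_Mod[OF j(1)]] Ti Tj by simp
    moreover have "P (eta i) (eta j) = 0" using IH j by simp
    moreover have "P (eta i) (eta (Suc j)) = 0" using IH j by simp
    ultimately show "P (eta (Suc i)) (eta j) = 0" by (simp add: theta_0)
  qed
  define j where "j = n - 1 - Suc i"
  have jl: "j < n" and jS: "Suc j = n - 1 - i" and ij: "i + j < n - 1" using Suc.prems by (auto simp: j_def)
  have Tj: "Theta n a (eta j) = eta (Suc j)" using Theta_eta_lt[of j n a] Suc.prems by (simp add: j_def)
  have "theta (P (eta i) (eta j)) = P (eta (Suc i)) (eta j) + P (eta i) (eta (Suc j))"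
    using horiz[OF hor eta_Mod[OF il] eta_Mod[OF jl]] Ti Tj by simp
  moreover have "P (eta i) (eta j) = 0" using IH jl ij by simp
  moreover have "P (eta i) (eta (Suc j)) = (-1)^i * P (eta 0) (eta (n - 1))" using IH jS by simp
  ultimately have "P (eta (Suc i)) (eta j) = (-1)^(Suc i) * P (eta 0) (eta (n - 1))"
    by (simp add: theta_0 eq_neg_iff_add_eq_0)
  then show ?case using A by (simp add: j_def)
qed

lemma basis_unique:
  fixes P Q :: "(nat \<Rightarrow> 'a::field_char_0 rfun) \<Rightarrow> (nat \<Rightarrow> 'a rfun) \<Rightarrow> 'a rfun"
  assumes n1: "n \<ge> 1" and admP: "admissible_pairing n a P" and admQ: "admissible_pairing n a Q"
    and g: "Q (eta 0) (eta (n - 1)) = P (eta 0) (eta (n - 1))"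
  shows "i < n \<Longrightarrow> \<forall>j<n. Q (eta i) (eta j) = P (eta i) (eta j)"
proof (induction i)
  case 0
  show ?case
  proof (intro allI impI)
    fix j assume j: "j < n"
    show "Q (eta 0) (eta j) = P (eta 0) (eta j)"
    proof (cases "j + 1 < n")
      case True then show ?thesis using adm_parts(3)[OF admP] adm_parts(3)[OF admQ] by simp
    next
      case False then have "j = n - 1" using j by simp
      then show ?thesis using g by simp
    qed
  qed
next
  case (Suc i)
  have il: "i < n" using Suc by simp
  note IH = Suc.IH[OF il]
  have bilP: "bilinear_on n P" and horP: "horizontal n a P" using adm_parts[OF admP] by auto
  have bilQ: "bilinear_on n Q" and horQ: "horizontal n a Q" using adm_parts[OF admQ] by auto
  have Ti: "Theta n a (eta i) = eta (Suc i)" using Theta_eta_lt[of i n a] Suc.prems by simp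
  show ?case
  proof (intro allI impI)
    fix j assume jl: "j < n"
    have hP: "theta (P (eta i) (eta j)) = P (eta (Suc i)) (eta j) + P (eta i) (Theta n a (eta j))"
      using horiz[OF horP eta_Mod[OF il] eta_Mod[OF jl]] Ti by simp
    have hQ: "theta (Q (eta i) (eta j)) = Q (eta (Suc i)) (eta j) + Q (eta i) (Theta n a (eta j))"
      using horiz[OF horQ eta_Mod[OF il] eta_Mod[OF jl]] Ti by simp
    have "Q (eta i) (Theta n a (eta j)) = (\<Sum>k<n. Theta n a (eta j) k * Q (eta i) (eta k))"
      by (rule P_right[OF bilQ Theta_Mod eta_Mod[OF il]])
    also have "\<dots> = (\<Sum>k<n. Theta n a (eta j) k * P (eta i) (eta k))"
      using IH by (intro sum.cong) auto
    also have "\<dots> = P (eta i) (Theta n a (eta j))"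
      by (rule P_right[OF bilP Theta_Mod eta_Mod[OF il], symmetric])
    finally have "Q (eta i) (Theta n a (eta j)) = P (eta i) (Theta n a (eta j))" .
    then show "Q (eta (Suc i)) (eta j) = P (eta (Suc i)) (eta j)"
      using hP hQ IH jl by (metis add_right_cancel)
  qed
qed

lemma unique:
  fixes P Q :: "(nat \<Rightarrow> 'a::field_char_0 rfun) \<Rightarrow> (nat \<Rightarrow> 'a rfun) \<Rightarrow> 'a rfun"
  assumes n1: "n \<ge> 1" and admP: "admissible_pairing n a P" and admQ: "admissible_pairing n a Q"
    and g: "Q (eta 0) (eta (n - 1)) = P (eta 0) (eta (n - 1))"
    and x: "x \<in> Mod n" and y: "y \<in> Mod n"
  shows "Q x y = P x y"
proof -
  have B: "\<forall>i<n. \<forall>j<n. Q (eta i) (eta j) = P (eta i) (eta j)"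
    using basis_unique[OF n1 admP admQ g] by blast
  show ?thesis
    using B by (simp add: P_both[OF adm_parts(1)[OF admP] x y] P_both[OF adm_parts(1)[OF admQ] x y])
qed




lemma neg1_sq: "((-1)::'b::ring_1)^m * (-1)^m = 1"
  by (induction m) (auto simp: algebra_simps)

lemma rearr: "(e::'b::comm_ring_1) * (x * (e * y)) = x * y * (e * e)"
  by (simp add: mult_ac)

lemma ode:
  fixes P :: "(nat \<Rightarrow> 'a::field_char_0 rfun) \<Rightarrow> (nat \<Rightarrow> 'a rfun) \<Rightarrow> 'a rfun"
  assumes n1: "n \<ge> 1" and adm: "admissible_pairing n a P"
  shows "of_nat n * theta (P (eta 0) (eta (n - 1))) = - 2 * a (n - 1) * P (eta 0) (eta (n - 1))"
proof -
  define g where "g = P (eta 0) (eta (n - 1))"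
  have bil: "bilinear_on n P" and hor: "horizontal n a P" using adm_parts[OF adm] by auto
  note V = vanish[OF n1 adm]
  define r where "r i = P (Theta n a (eta i)) (eta (n - 1 - i))" for i
  define s where "s i = P (eta i) (Theta n a (eta (n - 1 - i)))" for i
  have hrs: "(-1)^i * theta g = r i + s i" if il: "i < n" for i
  proof -
    have jl: "n - 1 - i < n" using n1 by simp
    have "theta (P (eta i) (eta (n - 1 - i))) = r i + s i"
      unfolding r_def s_def by (rule horiz[OF hor eta_Mod[OF il] eta_Mod[OF jl]])
    then show ?thesis using V[OF il] by (simp add: theta_sign g_def)
  qed
  have link: "r i = s (Suc i)" if il: "Suc i < n" for i
  proof -
    have "Theta n a (eta (n - 1 - Suc i)) = eta (Suc (n - 1 - Suc i))"
      using Theta_eta_lt[of "n - 1 - Suc i" n a] il by simp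
    moreover have "Suc (n - 1 - Suc i) = n - 1 - i" using il by simp
    moreover have "Theta n a (eta i) = eta (Suc i)" using Theta_eta_lt[of i n a] il by simp
    ultimately show ?thesis unfolding r_def s_def by simp
  qed
  have tele: "m < n \<Longrightarrow> (\<Sum>i<Suc m. (-1)^i * (r i + s i)) = s 0 + (-1)^m * r m" for m
  proof (induction m)
    case 0 then show ?case by simp
  next
    case (Suc m)
    have "(\<Sum>i<Suc (Suc m). (-1)^i * (r i + s i)) = s 0 + (-1)^m * r m + (-1)^(Suc m) * (r (Suc m) + s (Suc m))"
      using Suc by simp
    also have "\<dots> = s 0 + (-1)^(Suc m) * r (Suc m)"
      using link[of m] Suc.prems by (simp add: algebra_simps)
    finally show ?case .
  qed
  have LHS: "(\<Sum>i<n. (-1)^i * (r i + s i)) = of_nat n * theta g"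
  proof -
    have "(\<Sum>i<n. (-1)^i * (r i + s i)) = (\<Sum>i<n. (-1)^i * ((-1)^i * theta g))"
      using hrs by (intro sum.cong) auto
    also have "\<dots> = (\<Sum>i<n. theta g)"
      by (intro sum.cong refl) (simp add: mult.assoc[symmetric] neg1_sq)
    finally show ?thesis by simp
  qed
  have TL: "Theta n a (eta (n - 1)) = (\<lambda>k. if k < n then - a k else 0)"
    by (rule Theta_eta_last[OF n1])
  have nl: "n - 1 < n" using n1 by simp
  have TLv: "Theta n a (eta (n - 1)) (n - 1) = - a (n - 1)"
    by (subst TL) (use nl in simp)
  have s0: "s 0 = - a (n - 1) * g"
  proof -
    have "s 0 = (\<Sum>l<n. Theta n a (eta (n - 1)) l * P (eta 0) (eta l))"
      unfolding s_def using P_right[OF bil Theta_Mod eta_Mod[of 0 n]] n1 by simp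
    also have "\<dots> = Theta n a (eta (n - 1)) (n - 1) * P (eta 0) (eta (n - 1))"
      by (rule sum_single_at[OF nl]) (use adm_parts(3)[OF adm] in auto)
    finally show ?thesis unfolding TLv g_def by simp
  qed
  have rl: "r (n - 1) = - a (n - 1) * ((-1)^(n - 1) * g)"
  proof -
    have "r (n - 1) = (\<Sum>k<n. Theta n a (eta (n - 1)) k * P (eta k) (eta 0))"
      unfolding r_def using P_left[OF bil Theta_Mod eta_Mod[of 0 n]] n1 by simp
    also have "\<dots> = Theta n a (eta (n - 1)) (n - 1) * P (eta (n - 1)) (eta 0)"
    proof (rule sum_single_at[OF nl], intro allI impI)
      fix k assume "k < n" "k \<noteq> n - 1"
      then show "Theta n a (eta (n - 1)) k * P (eta k) (eta 0) = 0" using V[of k] n1 by auto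
    qed
    also have "P (eta (n - 1)) (eta 0) = (-1)^(n - 1) * g" using V[OF nl] by (simp add: g_def)
    finally show ?thesis unfolding TLv by simp
  qed
  have "of_nat n * theta g = s 0 + (-1)^(n - 1) * r (n - 1)"
    using LHS tele[of "n - 1"] n1 by simp
  also have "\<dots> = - 2 * a (n - 1) * g"
  proof -
    have "(-1)^(n - 1) * r (n - 1) = - a (n - 1) * g * ((-1)^(n - 1) * (-1)^(n - 1))"
      unfolding rl by (rule rearr)
    also have "\<dots> = - a (n - 1) * g" by (simp only: neg1_sq mult_1_right)
    finally show ?thesis using s0 by simp
  qed
  finally show ?thesis by (simp add: g_def)
qed




lemma sym_pair:
  fixes P :: "(nat \<Rightarrow> 'a::field_char_0 rfun) \<Rightarrow> (nat \<Rightarrow> 'a rfun) \<Rightarrow> 'a rfun"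
  assumes n1: "n \<ge> 1" and adm: "admissible_pairing n a P" and x: "x \<in> Mod n" and y: "y \<in> Mod n"
  shows "P y x = (-1)^(n + 1) * P x y"
proof -
  have bil: "bilinear_on n P" and hor: "horizontal n a P" using adm_parts[OF adm] by auto
  note V = vanish[OF n1 adm]
  define Q where "Q = (\<lambda>x y. (-1)^(n + 1) * P y x)"
  have bilQ: "bilinear_on n Q"
    unfolding bilinear_on_def Q_def
    by (simp add: bil_add_left[OF bil] bil_add_right[OF bil] bil_smul_left[OF bil] bil_smul_right[OF bil] algebra_simps)
  have horQ: "horizontal n a Q"
    unfolding horizontal_def Q_def
  proof (intro ballI)
    fix u v :: "nat \<Rightarrow> 'a rfun" assume u: "u \<in> Mod n" and v: "v \<in> Mod n"
    show "theta ((-1)^(n + 1) * P v u) = (-1)^(n + 1) * P v (Theta n a u) + (-1)^(n + 1) * P (Theta n a v) u"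
      unfolding theta_sign horiz[OF hor v u] by (simp add: algebra_simps)
  qed
  have vQ: "\<forall>i. i + 1 < n \<longrightarrow> Q (eta 0) (eta i) = 0"
  proof (intro allI impI)
    fix i assume "i + 1 < n"
    then show "Q (eta 0) (eta i) = 0" using V[of i] unfolding Q_def by auto
  qed
  have admQ: "admissible_pairing n a Q" using bilQ horQ vQ by (simp add: admissible_pairing_def)
  obtain m where nm: "n = Suc m" using n1 by (cases n) auto
  have g: "Q (eta 0) (eta (n - 1)) = P (eta 0) (eta (n - 1))"
  proof -
    have "P (eta (n - 1)) (eta 0) = (-1)^m * P (eta 0) (eta (n - 1))"
      using V[of "n - 1"] nm by simp
    then have "Q (eta 0) (eta (n - 1)) = ((-1)^m * (-1)^m) * P (eta 0) (eta (n - 1))"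
      unfolding Q_def nm by (simp add: mult.assoc)
    then show ?thesis by (simp only: neg1_sq mult_1_left)
  qed
  have "Q x y = P x y" by (rule unique[OF n1 adm admQ g x y])
  then have E: "(-1)^(n + 1) * P y x = P x y" unfolding Q_def .
  have "(-1)^(n + 1) * P x y = ((-1)^(n + 1) * (-1)^(n + 1)) * P y x"
    by (subst E[symmetric]) (simp only: mult.assoc)
  then show ?thesis by (simp only: neg1_sq mult_1_left)
qed

lemma nondeg:
  fixes P :: "(nat \<Rightarrow> 'a::field_char_0 rfun) \<Rightarrow> (nat \<Rightarrow> 'a rfun) \<Rightarrow> 'a rfun"
  assumes n1: "n \<ge> 1" and adm: "admissible_pairing n a P" and g: "P (eta 0) (eta (n - 1)) \<noteq> 0"
    and x: "x \<in> Mod n" and z: "\<forall>y\<in>Mod n. P x y = 0"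
  shows "x = (\<lambda>_. 0)"
proof (rule ccontr)
  assume "x \<noteq> (\<lambda>_. 0)"
  then obtain k0 where k0: "x k0 \<noteq> 0" by auto
  have bil: "bilinear_on n P" using adm_parts[OF adm] by auto
  note V = vanish[OF n1 adm]
  define S where "S = {k. x k \<noteq> 0}"
  have Ssub: "S \<subseteq> {..<n}" using x unfolding S_def Mod_def by (auto simp: not_le[symmetric])
  have fin: "finite S" using Ssub finite_subset by blast
  have ne: "S \<noteq> {}" using k0 S_def by auto
  define m where "m = Max S"
  have mS: "m \<in> S" using fin ne m_def by simp
  have mmax: "\<And>k. k \<in> S \<Longrightarrow> k \<le> m" using fin m_def by simp
  have ml: "m < n" using mS Ssub by auto
  define j where "j = n - 1 - m"
  have jl: "j < n" using ml by (simp add: j_def)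
  have "P x (eta j) = (\<Sum>k<n. x k * P (eta k) (eta j))" by (rule P_left[OF bil x eta_Mod[OF jl]])
  also have "\<dots> = x m * P (eta m) (eta j)"
  proof (rule sum_single_at[OF ml], intro allI impI)
    fix k assume k: "k < n" "k \<noteq> m"
    show "x k * P (eta k) (eta j) = 0"
    proof (cases "x k = 0")
      case False
      then have "k \<le> m" using mmax S_def by auto
      then have "k + j < n - 1" using k ml by (simp add: j_def)
      then show ?thesis using V[OF k(1)] jl by simp
    qed simp
  qed
  also have "\<dots> = x m * ((-1)^m * P (eta 0) (eta (n - 1)))" using V[OF ml] by (simp add: j_def)
  finally have "P x (eta j) \<noteq> 0" using mS g S_def by simp
  then show False using z eta_Mod[OF jl] by blast
qed

lemma fil_orth:
  fixes P :: "(nat \<Rightarrow> 'a::field_char_0 rfun) \<Rightarrow> (nat \<Rightarrow> 'a rfun) \<Rightarrow> 'a rfun"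
  assumes n1: "n \<ge> 1" and adm: "admissible_pairing n a P" and i: "i < n"
    and x: "x \<in> Fil n i" and y: "y \<in> Fil n (n - i)"
  shows "P x y = 0"
proof -
  have bil: "bilinear_on n P" using adm_parts[OF adm] by auto
  note V = vanish[OF n1 adm]
  have xM: "x \<in> Mod n" and yM: "y \<in> Mod n" using x y by (auto simp: Fil_def)
  have "P x y = (\<Sum>k<n. \<Sum>l<n. x k * y l * P (eta k) (eta l))" by (rule P_both[OF bil xM yM])
  also have "\<dots> = 0"
  proof (intro sum.neutral ballI)
    fix k l assume k: "k \<in> {..<n}" and l: "l \<in> {..<n}"
    show "x k * y l * P (eta k) (eta l) = 0"
    proof (cases "n \<le> k + i")
      case True then show ?thesis using x by (simp add: Fil_def)
    next
      case F1: False
      show ?thesis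
      proof (cases "n \<le> l + (n - i)")
        case True then show ?thesis using y by (simp add: Fil_def)
      next
        case False
        then have "k + l < n - 1" using F1 i by simp
        then show ?thesis using V[of k] k l by simp
      qed
    qed
  qed
  finally show ?thesis .
qed

lemma beta_part:
  fixes P :: "(nat \<Rightarrow> 'a::field_char_0 rfun) \<Rightarrow> (nat \<Rightarrow> 'a rfun) \<Rightarrow> 'a rfun"
    and phi :: "'a rfun \<Rightarrow> 'b::field"
  assumes n1: "n \<ge> 1" and adm: "admissible_pairing n a P"
    and de: "diff_ext phi D" and ex: "\<exists>b. beta_factor n a phi D b"
  shows "\<exists>b c. beta_factor n a phi D b \<and> phi (P (eta 0) (eta (n - 1))) = phi (cst c) * inverse b"
proof -
  define g where "g = P (eta 0) (eta (n - 1))"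
  have inj: "inj phi" and p1: "phi 1 = 1" and padd: "\<And>x y. phi (x + y) = phi x + phi y"
    and pmul: "\<And>x y. phi (x * y) = phi x * phi y"
    and Dadd: "\<And>x y. D (x + y) = D x + D y" and Dmul: "\<And>x y. D (x * y) = D x * y + x * D y"
    and Dphi: "\<And>x. D (phi x) = phi (theta x)"
    using de unfolding diff_ext_def by auto
  have p0: "phi 0 = 0" using padd[of 0 0] by (metis add.right_neutral add_left_cancel)
  have pneg: "phi (- x) = - phi x" for x
    using padd[of x "- x"] p0 by (simp add: eq_neg_iff_add_eq_0 add.commute)
  have pnat: "phi (of_nat m * x) = of_nat m * phi x" for m x
    by (induction m) (simp_all add: p0 padd distrib_right)
  have D11: "D 1 = D 1 + D 1" using Dmul[of 1 1] by simp
  have D1: "D 1 = 0" using D11 by (metis add.right_neutral add_left_cancel)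
  have Dinv: "D (inverse y) = - D y * inverse y * inverse y" if "y \<noteq> 0" for y
  proof -
    have "0 = D (y * inverse y)" using that D1 by simp
    also have "\<dots> = D y * inverse y + y * D (inverse y)" by (rule Dmul)
    finally have "y * D (inverse y) = - (D y * inverse y)" by (simp add: eq_neg_iff_add_eq_0 add.commute)
    then have "D (inverse y) = inverse y * (- (D y * inverse y))"
      using that by (metis (no_types, lifting) mult.assoc mult.left_commute mult_1_right right_inverse)
    then show ?thesis by (simp add: algebra_simps)
  qed
  have cst0: "cst 0 = (0::'a rfun)" by (simp add: cst_def)
  have cst1: "cst 1 = (1::'a rfun)" by (simp add: cst_def pCons_one)
  show ?thesis
  proof (cases "g = 0")
    case True
    obtain b where "beta_factor n a phi D b" using ex by blast
    then have "beta_factor n a phi D b \<and> phi g = phi (cst 0) * inverse b" using True p0 cst0 by simp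
    then show ?thesis unfolding g_def by blast
  next
    case False
    have pg: "phi g \<noteq> 0" using False inj p0 by (metis injD)
    have O: "of_nat n * theta g = - 2 * a (n - 1) * g" unfolding g_def by (rule ode[OF n1 adm])
    have "of_nat n * phi (theta g) = phi (of_nat n * theta g)" by (simp add: pnat)
    also have "\<dots> = phi (- (a (n - 1) * g + a (n - 1) * g))" using O by (simp add: algebra_simps)
    also have "\<dots> = - (phi (a (n - 1) * g) + phi (a (n - 1) * g))" by (simp only: pneg padd)
    also have "\<dots> = - 2 * phi (a (n - 1)) * phi g" by (simp add: pmul algebra_simps)
    finally have E: "of_nat n * phi (theta g) = - 2 * phi (a (n - 1)) * phi g" .
    define b where "b = inverse (phi g)"
    have bnz: "b \<noteq> 0" using pg by (simp add: b_def)
    have "of_nat n * D b = - (of_nat n * phi (theta g)) * inverse (phi g) * inverse (phi g)"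
      using Dinv[OF pg] Dphi[of g] by (simp add: b_def)
    also have "\<dots> = 2 * phi (a (n - 1)) * b"
      unfolding E b_def using pg by (simp add: field_simps)
    finally have bf: "beta_factor n a phi D b" using bnz by (simp add: beta_factor_def)
    have "phi g = phi (cst 1) * inverse b" using cst1 p1 by (simp add: b_def)
    then show ?thesis using bf by (auto simp: g_def)
  qed
qed


theorem lemma1p3:
  fixes n :: nat and a :: "nat \<Rightarrow> 'a::field_char_0 rfun"
    and P :: "(nat \<Rightarrow> 'a rfun) \<Rightarrow> (nat \<Rightarrow> 'a rfun) \<Rightarrow> 'a rfun"
  assumes "n \<ge> 1"
    and "admissible_pairing n a P"
  defines "\<gamma> \<equiv> P (eta 0) (eta (n - 1))"
  shows
    "(\<forall>Q. admissible_pairing n a Q \<and> Q (eta 0) (eta (n - 1)) = \<gamma> \<longrightarrow>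
          (\<forall>x\<in>Mod n. \<forall>y\<in>Mod n. Q x y = P x y))
     \<and> (\<forall>(phi :: 'a rfun \<Rightarrow> 'b::field) D. diff_ext phi D \<and> (\<exists>b. beta_factor n a phi D b) \<longrightarrow>
          (\<exists>b c. beta_factor n a phi D b \<and> phi \<gamma> = phi (cst c) * inverse b))
     \<and> (\<forall>x\<in>Mod n. \<forall>y\<in>Mod n. P y x = (-1) ^ (n + 1) * P x y)
     \<and> (\<gamma> \<noteq> 0 \<longrightarrow> polarization n a P)"
proof (intro conjI)
  show "\<forall>Q. admissible_pairing n a Q \<and> Q (eta 0) (eta (n - 1)) = \<gamma> \<longrightarrow>
          (\<forall>x\<in>Mod n. \<forall>y\<in>Mod n. Q x y = P x y)"
    using unique[OF assms(1) assms(2)] unfolding \<gamma>_def by blast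
  show "\<forall>(phi :: 'a rfun \<Rightarrow> 'b::field) D. diff_ext phi D \<and> (\<exists>b. beta_factor n a phi D b) \<longrightarrow>
          (\<exists>b c. beta_factor n a phi D b \<and> phi \<gamma> = phi (cst c) * inverse b)"
    using beta_part[OF assms(1) assms(2)] unfolding \<gamma>_def by blast
  show S: "\<forall>x\<in>Mod n. \<forall>y\<in>Mod n. P y x = (-1) ^ (n + 1) * P x y"
    using sym_pair[OF assms(1) assms(2)] by blast
  show "\<gamma> \<noteq> 0 \<longrightarrow> polarization n a P"
  proof
    assume g: "\<gamma> \<noteq> 0"
    have "\<forall>x\<in>Mod n. (\<forall>y\<in>Mod n. P x y = 0) \<longrightarrow> x = (\<lambda>_. 0)"
      using nondeg[OF assms(1) assms(2)] g unfolding \<gamma>_def by blast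
    moreover have "\<forall>i<n. \<forall>x\<in>Fil n i. \<forall>y\<in>Fil n (n - i). P x y = 0"
      using fil_orth[OF assms(1) assms(2)] by blast
    ultimately show "polarization n a P"
      using S adm_parts[OF assms(2)] unfolding polarization_def by blast
  qed
qed

end
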